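(* For each $n,k\ge1$ there exist constants $A_{n,k},C_{n,k}$ such that if $A=aH-\sum_{i=1}^nb_iE_i\in U_5$ is reduced and satisfies $a>A_{n,k}$, $3a-\sum_{i=1}^{\min\{n,9\}}b_i>C_{n,k}$ and $3a-\sum_{i=1}^nb_i\ge1$, then $A\ge kH-kE_1$. In particular $A$ is not minimal in $U_5$.
   Context: $X=\mathbb{CP}^2\#n\overline{\mathbb{CP}}^2$, $K_0=-3H+E_1+\cdots+E_n$, $\mathrm{ind}(A):=A^2-K_0\cdot A$, $U_5=\{A\in H_2(X;\mathbb{Z}):\mathrm{ind}(A)\ge2k,\ A\cdot H>0\}$ (note $kH-kE_1\in U_5$). With $H^2(X;\mathbb{R})\cong\mathbb{R}^{n+1}$ via $(x_0,\dots,x_n)\leftrightarrow x_0PD(H)-\sum x_iPD(E_i)$, the reduced cone $\mathcal{P}$ is: $0<x_1<x_0$ ($n=1$); $0<x_2\le x_1$, $x_1+x_2<x_0$ ($n=2$); $0<x_n\le\cdots\le x_1$, $x_1+x_2+x_3\le x_0$, $\sum x_i^2<x_0^2$ ($n\ge3$); $\mathcal{P}^{c_1>0}=\{[\omega]\in\mathcal{P}:\omega(3H-\sum E_i)>0\}$. For $A,B\in U_5$, $A\ge B$ means $\omega(A)\ge\omega(B)$ for all $[\omega]\in\mathcal{P}^{c_1>0}$; $A$ is minimal if no other $B\in U_5$ satisfies $A\ge B$. A class $aH-\sum b_iE_i$ is reduced if $a>0$, $b_1\ge\cdots\ge b_n\ge0$, $a\ge b_1+b_2+b_3$. *)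

theory Defs
  imports Complex_Main
begin

text \<open>A homology class A = aH - sum_{i=1}^n b_i E_i of X = CP^2 # n (-CP^2) is encoded
  as a pair (a, bs) with bs = [b_1, ..., b_n]; n = length bs.\<close>

type_synonym hclass = "int \<times> int list"

text \<open>1-indexed coefficient b_i; taken to be 0 outside 1..n.\<close>
definition bco :: "int list \<Rightarrow> nat \<Rightarrow> int" where
  "bco bs i = (if 1 \<le> i \<and> i \<le> length bs then bs ! (i - 1) else 0)"

text \<open>ind(A) = A^2 - K_0.A = (a^2 - sum b_i^2) - (-3a + sum b_i).\<close>
definition ind :: "hclass \<Rightarrow> int" where
  "ind A = (let a = fst A; bs = snd A; n = length bs in
     (a^2 - (\<Sum>i=1..n. (bco bs i)^2)) - (- 3 * a + (\<Sum>i=1..n. bco bs i)))"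

definition U5 :: "nat \<Rightarrow> nat \<Rightarrow> hclass set" where
  "U5 n k = {A. length (snd A) = n \<and> ind A \<ge> 2 * int k \<and> fst A > 0}"

text \<open>Cohomology classes x = (x_0,...,x_n) (only the values at 0..n are used),
  corresponding to x_0 PD(H) - sum x_i PD(E_i).  The reduced cone.\<close>
definition reduced_cone :: "nat \<Rightarrow> (nat \<Rightarrow> real) \<Rightarrow> bool" where
  "reduced_cone n x =
     (if n = 1 then 0 < x 1 \<and> x 1 < x 0
      else if n = 2 then 0 < x 2 \<and> x 2 \<le> x 1 \<and> x 1 + x 2 < x 0
      else 0 < x n \<and> (\<forall>i. 1 \<le> i \<and> i < n \<longrightarrow> x (i + 1) \<le> x i)
           \<and> x 1 + x 2 + x 3 \<le> x 0 \<and> (\<Sum>i=1..n. (x i)^2) < (x 0)^2)"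

text \<open>omega(3H - sum E_i) = 3 x_0 - sum x_i.\<close>
definition reduced_cone_c1pos :: "nat \<Rightarrow> (nat \<Rightarrow> real) \<Rightarrow> bool" where
  "reduced_cone_c1pos n x = (reduced_cone n x \<and> 3 * x 0 - (\<Sum>i=1..n. x i) > 0)"

definition pairing :: "(nat \<Rightarrow> real) \<Rightarrow> hclass \<Rightarrow> real" where
  "pairing x A = x 0 * of_int (fst A) - (\<Sum>i=1..length (snd A). x i * of_int (bco (snd A) i))"

definition cls_ge :: "nat \<Rightarrow> hclass \<Rightarrow> hclass \<Rightarrow> bool" where
  "cls_ge n A B = (\<forall>x. reduced_cone_c1pos n x \<longrightarrow> pairing x A \<ge> pairing x B)"

definition minimal_U5 :: "nat \<Rightarrow> nat \<Rightarrow> hclass \<Rightarrow> bool" where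
  "minimal_U5 n k A = (A \<in> U5 n k \<and> \<not> (\<exists>B \<in> U5 n k. B \<noteq> A \<and> cls_ge n A B))"

definition reduced_class :: "hclass \<Rightarrow> bool" where
  "reduced_class A = (let a = fst A; bs = snd A; n = length bs in
     a > 0 \<and> (\<forall>i. 1 \<le> i \<and> i < n \<longrightarrow> bco bs (i + 1) \<le> bco bs i)
     \<and> (n \<ge> 1 \<longrightarrow> bco bs n \<ge> 0)
     \<and> a \<ge> bco bs 1 + bco bs 2 + bco bs 3)"

definition kclass :: "nat \<Rightarrow> nat \<Rightarrow> hclass" where
  "kclass n k = (int k, int k # replicate (n - 1) 0)"

end

theory Submission imports Defs begin
lemma sum9: "(\<Sum>i=(1::nat)..9. f i) = f 1 + f 2 + f 3 + f 4 + f 5 + f 6 + f 7 + f 8 + (f 9 :: 'a::comm_monoid_add)"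
  by (simp add: numeral_eq_Suc sum.cl_ivl_Suc add.assoc)
lemma abel: "(\<Sum>i=1..n. c i * x i) = c (Suc n) * (\<Sum>i=1..n. x i) + (\<Sum>j=1..n. (c j - c (Suc j)) * (\<Sum>i=1..j. x i))"
  for c x :: "nat \<Rightarrow> real"
  by (induction n) (simp_all add: sum.cl_ivl_Suc algebra_simps)

definition wt :: "nat \<Rightarrow> real" where
  "wt j = (if j \<le> 3 then 1 else if j \<le> 9 then real j / 3 else 3)"

lemma bound_main:
  fixes c x :: "nat \<Rightarrow> real" and x0 :: real
  assumes mono: "\<And>j. 1 \<le> j \<Longrightarrow> c (Suc j) \<le> c j"
    and zero: "\<And>j. j > n \<Longrightarrow> c j = 0"
    and X: "\<And>j. 1 \<le> j \<Longrightarrow> j \<le> n \<Longrightarrow> (\<Sum>i=1..j. x i) \<le> wt j * x0"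
    and x0: "x0 \<ge> 0"
  shows "(\<Sum>i=1..n. c i * x i) \<le> x0 * (c 1 + (c 4 + c 5 + c 6 + c 7 + c 8 + c 9) / 3)"
proof -
  define N where "N = max n 9"
  have d: "c j - c (Suc j) \<ge> 0" if "j \<ge> 1" for j using mono[OF that] by simp
  have "(\<Sum>i=1..n. c i * x i) = (\<Sum>j=1..n. (c j - c (Suc j)) * (\<Sum>i=1..j. x i))"
    using abel[where c=c and x=x and n=n] zero[of "Suc n"] by simp
  also have "\<dots> \<le> (\<Sum>j=1..n. (c j - c (Suc j)) * (wt j * x0))"
    by (rule sum_mono) (use X in \<open>auto intro!: mult_left_mono d\<close>)
  also have "\<dots> \<le> (\<Sum>j=1..N. (c j - c (Suc j)) * (wt j * x0))"
    by (rule sum_mono2) (auto simp: N_def wt_def intro!: mult_nonneg_nonneg d x0)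
  also have "\<dots> = x0 * (\<Sum>j=1..N. (c j - c (Suc j)) * wt j)"
    by (simp add: sum_distrib_left algebra_simps)
  also have "(\<Sum>j=1..N. (c j - c (Suc j)) * wt j) = (\<Sum>j=1..9. (c j - c (Suc j)) * wt j) + (\<Sum>j=10..N. (c j - c (Suc j)) * wt j)"
  proof -
    have "{1..N} = {1..9} \<union> {10..N}" by (auto simp: N_def)
    thus ?thesis by (simp add: sum.union_disjoint)
  qed
  also have "(\<Sum>j=10..N. (c j - c (Suc j)) * wt j) = 3 * (\<Sum>j=10..N. (c j - c (Suc j)))"
    by (simp add: sum_distrib_left wt_def algebra_simps)
  also have "(\<Sum>j=10..N. (c j - c (Suc j))) = c 10 - c (Suc N)"
    using sum_Suc_diff[of 10 N "\<lambda>j. - c j"] by (simp add: N_def)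
  also have "c (Suc N) = 0" using zero[of "Suc N"] by (simp add: N_def)
  also have "(\<Sum>j=1..9. (c j - c (Suc j)) * wt j) = c 1 + (c 4 + c 5 + c 6 + c 7 + c 8 + c 9) / 3 - 3 * c 10"
    by (simp add: sum9 wt_def numeral_eq_Suc algebra_simps)
  finally show ?thesis by simp
qed

lemma chain_le:
  fixes x :: "nat \<Rightarrow> real"
  assumes "\<And>i. 1 \<le> i \<Longrightarrow> i < n \<Longrightarrow> x (i + 1) \<le> x i"
  shows "1 \<le> i \<Longrightarrow> i \<le> j \<Longrightarrow> j \<le> n \<Longrightarrow> x j \<le> x i"
proof (induction j)
  case 0 then show ?case by simp
next
  case (Suc j)
  show ?case
  proof (cases "i = Suc j")
    case True then show ?thesis by simp
  next
    case False
    then have "i \<le> j" using Suc by simp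
    then have "x j \<le> x i" using Suc by simp
    moreover have "x (j + 1) \<le> x j" using assms[of j] Suc \<open>i \<le> j\<close> by simp
    ultimately show ?thesis by simp
  qed
qed

lemma cone_facts:
  fixes x :: "nat \<Rightarrow> real"
  assumes "reduced_cone_c1pos n x" "n \<ge> 1"
  shows "x 0 \<ge> 0" "x 1 \<ge> 0"
    "\<And>j. 1 \<le> j \<Longrightarrow> j \<le> n \<Longrightarrow> (\<Sum>i=1..j. x i) \<le> wt j * x 0"
proof -
  have c1: "(\<Sum>i=1..n. x i) < 3 * x 0" using assms(1) by (simp add: reduced_cone_c1pos_def)
  have rc: "reduced_cone n x" using assms(1) by (simp add: reduced_cone_c1pos_def)
  have mono: "\<And>i. 1 \<le> i \<Longrightarrow> i < n \<Longrightarrow> x (i + 1) \<le> x i"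
  proof -
    fix i assume i: "1 \<le> i" "i < n"
    show "x (i + 1) \<le> x i"
    proof (cases "n = 2")
      case True then have "i = 1" using i by simp
      then show ?thesis using rc True by (simp add: reduced_cone_def numeral_eq_Suc)
    next
      case False then show ?thesis using rc i by (auto simp: reduced_cone_def)
    qed
  qed
  have xn: "x n > 0" using rc by (auto simp: reduced_cone_def split: if_splits)
  have pos: "x i > 0" if "1 \<le> i" "i \<le> n" for i
    using chain_le[where x=x and n=n, OF mono, of i n] that xn by simp
  have X0: "x 1 < x 0"
  proof (cases "n \<le> 2")
    case True
    then have "n = 1 \<or> n = 2" using assms(2) by auto
    then show ?thesis using rc pos[of 2] by (auto simp: reduced_cone_def)
  next
    case False
    then have "x 1 + x 2 + x 3 \<le> x 0" using rc by (auto simp: reduced_cone_def)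
    then show ?thesis using pos[of 2] pos[of 3] False by simp
  qed
  show "x 1 \<ge> 0" using pos[of 1] assms(2) by simp
  then show "x 0 \<ge> 0" using X0 by simp
  fix j assume j: "1 \<le> j" "j \<le> n"
  show "(\<Sum>i=1..j. x i) \<le> wt j * x 0"
  proof (cases "n \<le> 2")
    case True
    then have "j = 1 \<or> (j = 2 \<and> n = 2)" using j by auto
    then show ?thesis
    proof
      assume "j = 1" then show ?thesis using X0 by (simp add: wt_def)
    next
      assume "j = 2 \<and> n = 2"
      then show ?thesis using rc by (simp add: wt_def reduced_cone_def numeral_eq_Suc)
    qed
  next
    case False
    have x3: "x 1 + x 2 + x 3 \<le> x 0" using rc False by (auto simp: reduced_cone_def)
    have le3: "x 3 \<le> x 2" "x 2 \<le> x 1" using chain_le[where x=x and n=n, OF mono] False by auto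
    show ?thesis
    proof (cases "j \<le> 3")
      case True
      have "(\<Sum>i=1..j. x i) \<le> (\<Sum>i=1..3. x i)"
        by (rule sum_mono2) (use True False j in \<open>auto intro: less_imp_le[OF pos]\<close>)
      also have "\<dots> = x 1 + x 2 + x 3" by (simp add: numeral_eq_Suc)
      finally show ?thesis using x3 True by (simp add: wt_def)
    next
      case j3: False
      show ?thesis
      proof (cases "j \<le> 9")
        case True
        have "{1..j} = {1..3} \<union> {4..j}" using j3 by auto
        then have "(\<Sum>i=1..j. x i) = (\<Sum>i=1..3. x i) + (\<Sum>i=4..j. x i)"
          by (simp add: sum.union_disjoint)
        also have "(\<Sum>i=1..3. x i) = x 1 + x 2 + x 3" by (simp add: numeral_eq_Suc)
        also have "(\<Sum>i=4..j. x i) \<le> (\<Sum>i=4..j. x 3)"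
          by (rule sum_mono) (use chain_le[where x=x and n=n, OF mono] j in auto)
        also have "(\<Sum>i=4..j. x 3) = (real j - 3) * x 3" using j3 by simp
        finally have "(\<Sum>i=1..j. x i) \<le> x 1 + x 2 + x 3 + (real j - 3) * x 3" by simp
        moreover have "(real j - 3) * x 3 \<le> (real j - 3) * (x 0 / 3)"
          by (rule mult_left_mono) (use x3 le3 j3 in auto)
        ultimately show ?thesis using x3 True j3 by (simp add: wt_def field_simps)
      next
        case False
        have "(\<Sum>i=1..j. x i) \<le> (\<Sum>i=1..n. x i)"
          by (rule sum_mono2) (use j in \<open>auto intro: less_imp_le[OF pos]\<close>)
        then show ?thesis using c1 False j3 by (simp add: wt_def)
      qed
    qed
  qed
qed

lemma bco_out: "i > length bs \<Longrightarrow> bco bs i = 0" "bco bs 0 = 0"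
  by (auto simp: bco_def)

lemma kbco: "n \<ge> 1 \<Longrightarrow> bco (int k # replicate (n - 1) 0) i = (if i = 1 then int k else 0)"
  by (cases i) (auto simp: bco_def nth_Cons nth_replicate split: nat.splits)

lemma ksum: "n \<ge> 1 \<Longrightarrow> (\<Sum>i=1..n. f i * g (bco (int k # replicate (n - 1) 0) i)) = f 1 * g (int k) + (\<Sum>i=1..n. f i * g 0)
   - f 1 * g 0" for f :: "nat \<Rightarrow> 'a::comm_ring_1"
proof -
  assume n: "n \<ge> 1"
  have "(\<Sum>i=1..n. f i * g (bco (int k # replicate (n - 1) 0) i))
     = (\<Sum>i=1..n. f i * g 0 + (if i = 1 then f 1 * g (int k) - f 1 * g 0 else 0))"
    by (rule sum.cong; simp only: kbco[OF n]; simp)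
  also have "\<dots> = (\<Sum>i=1..n. f i * g 0) + (f 1 * g (int k) - f 1 * g 0)"
    using n by (simp add: sum.distrib)
  finally show ?thesis by (simp add: algebra_simps)
qed

theorem lemma4p5:
  fixes n k :: nat
  assumes "n \<ge> 1" and "k \<ge> 1"
  shows "\<exists>(Ank :: real) (Cnk :: real). \<forall>a :: int. \<forall>bs :: int list.
           (length bs = n \<and> (a, bs) \<in> U5 n k \<and> reduced_class (a, bs)
            \<and> of_int a > Ank
            \<and> of_int (3 * a - (\<Sum>i=1..min n 9. bco bs i)) > Cnk
            \<and> 3 * a - (\<Sum>i=1..n. bco bs i) \<ge> 1)
           \<longrightarrow> cls_ge n (a, bs) (kclass n k) \<and> \<not> minimal_U5 n k (a, bs)"
proof (rule exI[of _ "real k"], rule exI[of _ "6 * real k"], intro allI impI)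
  fix a :: int and bs :: "int list"
  assume H: "length bs = n \<and> (a, bs) \<in> U5 n k \<and> reduced_class (a, bs)
            \<and> of_int a > real k
            \<and> of_int (3 * a - (\<Sum>i=1..min n 9. bco bs i)) > 6 * real k
            \<and> 3 * a - (\<Sum>i=1..n. bco bs i) \<ge> 1"
  have len: "length bs = n" using H by simp
  have n1: "n \<ge> 1" by fact
  have RC: "reduced_class (a, bs)" using H by simp
  have ak: "real_of_int a > real k" using H by simp
  have Csum: "real_of_int (3 * a - (\<Sum>i=1..min n 9. bco bs i)) > 6 * real k" using H by simp
  have monoR: "\<And>i. 1 \<le> i \<Longrightarrow> i < n \<Longrightarrow> bco bs (i + 1) \<le> bco bs i"
    and bn: "bco bs n \<ge> 0" and a3: "a \<ge> bco bs 1 + bco bs 2 + bco bs 3"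
    using RC len n1 by (auto simp: reduced_class_def Let_def)
  define bb where "bb i = real_of_int (bco bs i)" for i
  have bbn: "bb n \<ge> 0" using bn by (simp add: bb_def)
  have bbmono0: "\<And>i. 1 \<le> i \<Longrightarrow> i < n \<Longrightarrow> bb (i + 1) \<le> bb i"
    using monoR by (simp add: bb_def)
  have bbz: "\<And>j. j > n \<Longrightarrow> bb j = 0" using bco_out len by (simp add: bb_def)
  have bbnn: "bb i \<ge> 0" for i
  proof (cases "1 \<le> i \<and> i \<le> n")
    case True
    then show ?thesis using chain_le[where x=bb and n=n, OF bbmono0, of i n] bbn by simp
  next
    case False
    then have "i = 0 \<or> i > n" by auto
    then show ?thesis using bbz bco_out(2)[of bs] by (auto simp: bb_def)
  qed
  have bbmono: "bb (j + 1) \<le> bb j" if "1 \<le> j" for j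
  proof (cases "j < n")
    case True then show ?thesis using bbmono0 that by simp
  next
    case False then show ?thesis using bbz[of "j+1"] bbnn[of j] by simp
  qed
  have m: "bb 2 \<le> bb 1" "bb 3 \<le> bb 2" "bb 4 \<le> bb 3" "bb 5 \<le> bb 4" "bb 6 \<le> bb 5"
     "bb 7 \<le> bb 6" "bb 8 \<le> bb 7" "bb 9 \<le> bb 8"
    using bbmono[of 1] bbmono[of 2] bbmono[of 3] bbmono[of 4] bbmono[of 5] bbmono[of 6]
      bbmono[of 7] bbmono[of 8] by (simp_all add: numeral_eq_Suc)
  have a3': "real_of_int a \<ge> bb 1 + bb 2 + bb 3" using a3 by (simp add: bb_def)
  have s9: "(\<Sum>i=1..min n 9. bco bs i) = (\<Sum>i=1..9. bco bs i)"
  proof (cases "n \<ge> 9")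
    case True then show ?thesis by simp
  next
    case False
    show ?thesis
      by (rule sum.mono_neutral_left) (use False len bco_out in auto)
  qed
  have C9: "3 * real_of_int a - (bb 1 + bb 2 + bb 3 + bb 4 + bb 5 + bb 6 + bb 7 + bb 8 + bb 9) > 6 * real k"
    using Csum unfolding s9 sum9 by (simp add: bb_def)
  have ge: "cls_ge n (a, bs) (kclass n k)"
    unfolding cls_ge_def
  proof (intro allI impI)
    fix x :: "nat \<Rightarrow> real"
    assume cone: "reduced_cone_c1pos n x"
    note cf = cone_facts[OF cone n1]
    have pA: "pairing x (a, bs) = x 0 * real_of_int a - (\<Sum>i=1..n. bb i * x i)"
      by (simp add: pairing_def len bb_def mult.commute)
    have lk: "length (int k # replicate (n - 1) 0) = n" using n1 by simp
    have pK: "pairing x (kclass n k) = x 0 * real k - x 1 * real k"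
      using ksum[OF n1, of x "\<lambda>z. real_of_int z" k] n1
      by (simp add: pairing_def kclass_def lk)
    have key: "(\<Sum>i=1..n. bb i * x i) - real k * x 1 \<le> (real_of_int a - real k) * x 0"
    proof (cases "bb 1 - real k \<ge> bb 2")
      case True
      define c where "c i = (if i = 1 then bb 1 - real k else bb i)" for i
      have cb: "(\<Sum>i=1..n. c i * x i) \<le> x 0 * (c 1 + (c 4 + c 5 + c 6 + c 7 + c 8 + c 9) / 3)"
      proof (rule bound_main[OF _ _ cf(3) cf(1)])
        fix j :: nat assume "1 \<le> j"
        then show "c (Suc j) \<le> c j" using bbmono[of j] True by (auto simp: c_def numeral_eq_Suc)
      next
        fix j assume "j > n" then show "c j = 0" using bbz n1 by (auto simp: c_def)
      qed
      have "(\<Sum>i=1..n. c i * x i) = (\<Sum>i=1..n. bb i * x i - (if i = 1 then real k * x 1 else 0))"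
        by (rule sum.cong) (auto simp: c_def algebra_simps)
      also have "\<dots> = (\<Sum>i=1..n. bb i * x i) - real k * x 1"
        using n1 by (simp add: sum_subtractf)
      finally have eq: "(\<Sum>i=1..n. c i * x i) = (\<Sum>i=1..n. bb i * x i) - real k * x 1" .
      have "c 1 + (c 4 + c 5 + c 6 + c 7 + c 8 + c 9) / 3 \<le> real_of_int a - real k"
         proof -
        have "c 1 = bb 1 - real k" "c 4 = bb 4" "c 5 = bb 5" "c 6 = bb 6" "c 7 = bb 7" "c 8 = bb 8" "c 9 = bb 9"
          by (simp_all add: c_def)
        then show ?thesis using m a3' unfolding add_divide_distrib by linarith
      qed
      then have "x 0 * (c 1 + (c 4 + c 5 + c 6 + c 7 + c 8 + c 9) / 3) \<le> x 0 * (real_of_int a - real k)"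
        by (rule mult_left_mono) (use cf in simp)
      then show ?thesis using cb eq by (simp add: mult.commute)
    next
      case False
      have cb: "(\<Sum>i=1..n. bb i * x i) \<le> x 0 * (bb 1 + (bb 4 + bb 5 + bb 6 + bb 7 + bb 8 + bb 9) / 3)"
        by (rule bound_main[OF _ _ cf(3) cf(1)]) (use bbmono bbz in auto)
      have "bb 1 + (bb 4 + bb 5 + bb 6 + bb 7 + bb 8 + bb 9) / 3 \<le> real_of_int a - real k"
        using m a3' C9 False unfolding add_divide_distrib by linarith
      then have "x 0 * (bb 1 + (bb 4 + bb 5 + bb 6 + bb 7 + bb 8 + bb 9) / 3) \<le> x 0 * (real_of_int a - real k)"
        by (rule mult_left_mono) (use cf in simp)
      moreover have "real k * x 1 \<ge> 0" using cf by simp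
      ultimately show ?thesis using cb by (simp add: mult.commute)
    qed
    show "pairing x (kclass n k) \<le> pairing x (a, bs)"
      using key pA pK by (simp add: algebra_simps)
  qed
  have kU: "kclass n k \<in> U5 n k"
  proof -
    have lk: "length (int k # replicate (n - 1) 0) = n" using n1 by simp
    have s1: "(\<Sum>i=1..n. (bco (int k # replicate (n - 1) 0) i)^2) = (int k)^2"
      using ksum[OF n1, of "\<lambda>_. 1" "\<lambda>z. z^2" k] by simp
    have s2: "(\<Sum>i=1..n. bco (int k # replicate (n - 1) 0) i) = int k"
      using ksum[OF n1, of "\<lambda>_. 1" "\<lambda>z. z" k] by simp
    have "ind (kclass n k) = 2 * int k"
      unfolding ind_def kclass_def Let_def fst_conv snd_conv lk s1 s2 by (simp add: algebra_simps)
    then show ?thesis using assms lk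
      by (simp add: U5_def kclass_def)
  qed
  have ne: "kclass n k \<noteq> (a, bs)" using ak by (auto simp: kclass_def)
  have "\<not> minimal_U5 n k (a, bs)"
    unfolding minimal_U5_def using kU ne ge by blast
  then show "cls_ge n (a, bs) (kclass n k) \<and> \<not> minimal_U5 n k (a, bs)" using ge by simp
qed

end
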